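(* For every $\alpha>0$ and every positive integer $\ell$ there is $\rho>0$ such that the following holds for every $n$-vertex $\ell$-uniform hypergraph $\mathcal{H}$ with $e(\mathcal{H})\le\rho n^\ell$: for every $p\in[0,1]$, if $R$ is the random subset of $V(\mathcal{H})$ containing each vertex independently with probability $p$, then \[ \Pr\big(e(\mathcal{H}[R])\ge\alpha (np)^\ell\big)\le\exp(-\rho np). \]
   Context: $\mathcal{H}[R]=\{A\in\mathcal{H}:A\subseteq R\}$ and $e(\cdot)$ denotes the number of edges. *)

theory Defs
  imports "HOL-Probability.Probability"
begin

definition uniform_hypergraph :: "nat \<Rightarrow> nat \<Rightarrow> nat set set \<Rightarrow> bool" where
  "uniform_hypergraph n l H \<longleftrightarrow> (\<forall>A\<in>H. A \<subseteq> {..<n} \<and> card A = l)"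

definition induced_edges :: "nat set set \<Rightarrow> nat set \<Rightarrow> nat" where
  "induced_edges H R = card {A \<in> H. A \<subseteq> R}"

text \<open>Random subset of {0..<n} containing each vertex independently with probability p,
  represented by its indicator function.\<close>
definition random_subset :: "nat \<Rightarrow> real \<Rightarrow> (nat \<Rightarrow> bool) pmf" where
  "random_subset n p = Pi_pmf {..<n} False (\<lambda>_. bernoulli_pmf p)"

end

theory Submission
  imports Defs
begin

lemma count_b:
  assumes H: "uniform_hypergraph n l H" and U: "U \<subseteq> {..<n}"
  shows "card {A\<in>H. card (A \<inter> U) = b} \<le> card U ^ b * n ^ (l - b)"
proof -
  have fU: "finite U" using U finite_subset by blast
  let ?S = "{B. B \<subseteq> U \<and> card B = b} \<times> {C. C \<subseteq> {..<n} \<and> card C = l - b}"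
  have inj: "inj_on (\<lambda>A. (A \<inter> U, A - U)) {A\<in>H. card (A \<inter> U) = b}"
    by (rule inj_onI) auto
  have sub: "(\<lambda>A. (A \<inter> U, A - U)) ` {A\<in>H. card (A \<inter> U) = b} \<subseteq> ?S"
  proof safe
    fix A assume "A \<in> H" "b = card (A \<inter> U)"
    then have "A \<subseteq> {..<n}" "card A = l" using H unfolding uniform_hypergraph_def by auto
    moreover have "finite A" using \<open>A \<subseteq> {..<n}\<close> finite_subset by blast
    ultimately show "card (A - U) = l - card (A \<inter> U)"
      by (simp add: card_Diff_subset_Int)
  qed (use H in \<open>auto simp: uniform_hypergraph_def\<close>)
  have finS: "finite ?S" using fU by auto
  have "card {A\<in>H. card (A \<inter> U) = b} \<le> card ?S"
    using card_inj_on_le[OF inj sub finS] .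
  also have "card ?S = (card U choose b) * (n choose (l - b))"
    using n_subsets[OF fU, of b] n_subsets[of "{..<n}" "l-b"] by (simp add: card_cartesian_product)
  also have "\<dots> \<le> card U ^ b * n ^ (l - b)"
  proof (intro mult_mono)
    show "card U choose b \<le> card U ^ b"
      by (cases "b \<le> card U") (auto intro: binomial_le_pow simp: binomial_eq_0)
    show "n choose (l - b) \<le> n ^ (l - b)"
      by (cases "l - b \<le> n") (auto intro: binomial_le_pow simp: binomial_eq_0)
  qed auto
  finally show ?thesis .
qed


lemma key_sum:
  assumes H: "uniform_hypergraph n l H" and U: "U \<subseteq> {..<n}" and p: "0 \<le> p" "p \<le> (1::real)"
  shows "(\<Sum>A\<in>H. p ^ card (U \<union> A)) \<le>
     p ^ card U * (real (card H) * p ^ l + (\<Sum>b\<in>{1..l}. real (card U) ^ b * real n ^ (l - b) * p ^ (l - b)))"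
proof -
  have fU: "finite U" using U finite_subset by blast
  have fH: "finite H"
    by (rule finite_subset[of _ "Pow {..<n}"]) (use H in \<open>auto simp: uniform_hypergraph_def\<close>)
  have eq: "p ^ card (U \<union> A) = p ^ card U * (\<Sum>b\<in>{0..l}. if card (A \<inter> U) = b then p ^ (l - b) else 0)"
    if A: "A \<in> H" for A
  proof -
    have "A \<subseteq> {..<n}" "card A = l" using H A unfolding uniform_hypergraph_def by auto
    have fA: "finite A" using \<open>A \<subseteq> {..<n}\<close> finite_subset by blast
    have "U \<union> A = U \<union> (A - U)" by auto
    moreover have "card (U \<union> (A - U)) = card U + card (A - U)"
      using fU fA by (intro card_Un_disjoint) auto
    ultimately have "card (U \<union> A) = card U + card (A - U)" by simp
    moreover have "card (A - U) = l - card (A \<inter> U)"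
      using \<open>card A = l\<close> fA
      by (simp add: card_Diff_subset_Int)
    moreover have "card (A \<inter> U) \<le> l" using \<open>card A = l\<close> fA by (metis card_mono Int_lower1)
    ultimately have c1: "card (U \<union> A) = card U + (l - card (A \<inter> U))"
      and c2: "card (A \<inter> U) \<in> {0..l}" by auto
    have "(\<Sum>b\<in>{0..l}. if card (A \<inter> U) = b then p ^ (l - b) else 0) = p ^ (l - card (A \<inter> U))"
      using sum.delta'[of "{0..l}" "card (A \<inter> U)" "\<lambda>b. p ^ (l - b)"] c2 by simp
    then show ?thesis unfolding c1 power_add by simp
  qed
  have "(\<Sum>A\<in>H. p ^ card (U \<union> A)) = p ^ card U * (\<Sum>A\<in>H. \<Sum>b\<in>{0..l}. if card (A \<inter> U) = b then p ^ (l - b) else 0)"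
    by (simp add: eq sum_distrib_left)
  also have "(\<Sum>A\<in>H. \<Sum>b\<in>{0..l}. if card (A \<inter> U) = b then p ^ (l - b) else 0)
      = (\<Sum>b\<in>{0..l}. real (card {A\<in>H. card (A \<inter> U) = b}) * p ^ (l - b))"
    by (subst sum.swap) (simp add: sum.If_cases fH Int_def)
  also have "\<dots> = real (card {A\<in>H. card (A \<inter> U) = 0}) * p ^ l
       + (\<Sum>b\<in>{1..l}. real (card {A\<in>H. card (A \<inter> U) = b}) * p ^ (l - b))"
    by (simp add: sum.atLeast_Suc_atMost)
  also have "\<dots> \<le> real (card H) * p ^ l + (\<Sum>b\<in>{1..l}. real (card U) ^ b * real n ^ (l - b) * p ^ (l - b))"
  proof (intro add_mono sum_mono mult_right_mono)
    show "real (card {A \<in> H. card (A \<inter> U) = 0}) \<le> real (card H)"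
      using fH by (simp add: card_mono)
    fix b
    show "real (card {A \<in> H. card (A \<inter> U) = b}) \<le> real (card U) ^ b * real n ^ (l - b)"
      using count_b[OF H U, of b] by (metis of_nat_le_iff of_nat_mult of_nat_power)
  qed (use p in auto)
  finally show ?thesis using p by (simp add: mult_left_mono)
qed


definition indU :: "nat set \<Rightarrow> (nat \<Rightarrow> bool) \<Rightarrow> real" where
  "indU U f = (if U \<subseteq> {v. f v} then 1 else 0)"

definition XX :: "nat set set \<Rightarrow> (nat \<Rightarrow> bool) \<Rightarrow> real" where
  "XX H f = real (induced_edges H {v. f v})"

lemma fin_set: "finite (set_pmf (random_subset n p))"
  unfolding random_subset_def
  by (simp add: set_Pi_pmf) (intro finite_PiE_dflt, auto)

lemma integ: "integrable (measure_pmf (random_subset n p)) (g :: _ \<Rightarrow> real)"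
  by (rule integrable_measure_pmf_finite[OF fin_set])

lemma base:
  assumes U: "U \<subseteq> {..<n}" and p: "0 \<le> p" "p \<le> 1"
  shows "measure_pmf.expectation (random_subset n p) (indU U) = p ^ card U"
proof -
  have fU: "finite U" using U finite_subset by blast
  have "indU U = indicator {f. U \<subseteq> {v. f v}}"
    by (auto simp: indU_def fun_eq_iff indicator_def)
  hence "measure_pmf.expectation (random_subset n p) (indU U)
      = measure_pmf.prob (random_subset n p) {f. U \<subseteq> {v. f v}}"
    by simp
  also have "{f. U \<subseteq> {v. f v}} = Pi {..<n} (\<lambda>x. if x \<in> U then {True} else UNIV)"
    using U by (auto simp: Pi_def)
  also have "measure_pmf.prob (random_subset n p) \<dots> =
      (\<Prod>x\<in>{..<n}. measure_pmf.prob (bernoulli_pmf p) (if x \<in> U then {True} else UNIV))"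
    unfolding random_subset_def by (rule measure_Pi_pmf_Pi) simp
  also have "\<dots> = (\<Prod>x\<in>{..<n}. if x \<in> U then p else 1)"
    using p by (intro prod.cong) (auto simp: measure_pmf_single)
  also have "\<dots> = (\<Prod>x\<in>U. p)"
    using U by (subst prod.If_cases) (auto simp: Int_absorb1 intro!: prod.neutral)
  also have "\<dots> = p ^ card U" by simp
  finally show ?thesis .
qed

lemma XX_sum:
  assumes "finite H"
  shows "XX H f = (\<Sum>A\<in>H. indU A f)"
  using assms by (simp add: XX_def induced_edges_def indU_def sum.If_cases Int_def)

lemma rec:
  assumes fH: "finite H"
  shows "measure_pmf.expectation (random_subset n p) (\<lambda>f. indU U f * XX H f ^ Suc k)
    = (\<Sum>A\<in>H. measure_pmf.expectation (random_subset n p) (\<lambda>f. indU (U \<union> A) f * XX H f ^ k))"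
proof -
  have "(\<lambda>f. indU U f * XX H f ^ Suc k) = (\<lambda>f. \<Sum>A\<in>H. indU (U \<union> A) f * XX H f ^ k)"
  proof
    fix f
    have e: "XX H f = (\<Sum>A\<in>H. indU A f)" by (rule XX_sum[OF fH])
    have "indU U f * XX H f ^ Suc k = (indU U f * XX H f ^ k) * XX H f"
      by (simp add: power_Suc2 mult_ac del: power_Suc)
    also have "\<dots> = (indU U f * XX H f ^ k) * (\<Sum>A\<in>H. indU A f)"
      by (simp only: e)
    also have "\<dots> = (\<Sum>A\<in>H. indU U f * indU A f * XX H f ^ k)"
      by (simp add: sum_distrib_left mult_ac)
    also have "\<dots> = (\<Sum>A\<in>H. indU (U \<union> A) f * XX H f ^ k)"
      by (intro sum.cong) (auto simp: indU_def)
    finally show "indU U f * XX H f ^ Suc k = (\<Sum>A\<in>H. indU (U \<union> A) f * XX H f ^ k)" .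
  qed
  thus ?thesis by (simp add: Bochner_Integration.integral_sum integ)
qed


lemma induct_bound:
  assumes H: "uniform_hypergraph n l H" and p: "0 \<le> p" "p \<le> 1" and C: "C \<ge> 0"
    and key: "\<And>U. U \<subseteq> {..<n} \<Longrightarrow> real (card U) \<le> \<Lambda> \<Longrightarrow> (\<Sum>A\<in>H. p ^ card (U \<union> A)) \<le> p ^ card U * C"
  shows "U \<subseteq> {..<n} \<Longrightarrow> real (card U + k * l) \<le> \<Lambda> + real l \<Longrightarrow>
    measure_pmf.expectation (random_subset n p) (\<lambda>f. indU U f * XX H f ^ k) \<le> p ^ card U * C ^ k"
proof (induction k arbitrary: U)
  case 0
  then show ?case using base[OF _ p] by simp
next
  case (Suc k)
  have fH: "finite H"
    by (rule finite_subset[of _ "Pow {..<n}"]) (use H in \<open>auto simp: uniform_hypergraph_def\<close>)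
  have cU: "real (card U) \<le> \<Lambda>"
  proof -
    have "0 \<le> real k * real l" by simp
    moreover have "real (card U) + real k * real l \<le> \<Lambda>" using Suc.prems(2) by simp
    ultimately show ?thesis by linarith
  qed
  have "measure_pmf.expectation (random_subset n p) (\<lambda>f. indU U f * XX H f ^ Suc k)
    = (\<Sum>A\<in>H. measure_pmf.expectation (random_subset n p) (\<lambda>f. indU (U \<union> A) f * XX H f ^ k))"
    by (rule rec[OF fH])
  also have "\<dots> \<le> (\<Sum>A\<in>H. p ^ card (U \<union> A) * C ^ k)"
  proof (rule sum_mono)
    fix A assume A: "A \<in> H"
    have Asub: "A \<subseteq> {..<n}" "card A = l" using H A unfolding uniform_hypergraph_def by auto
    have fA: "finite A" using Asub finite_subset by blast
    have "card (U \<union> A) \<le> card U + l" using card_Un_le[of U A] Asub by simp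
    hence "real (card (U \<union> A) + k * l) \<le> \<Lambda> + real l" using Suc.prems(2) by simp
    moreover have "U \<union> A \<subseteq> {..<n}" using Suc.prems(1) Asub by auto
    ultimately show "measure_pmf.expectation (random_subset n p) (\<lambda>f. indU (U \<union> A) f * XX H f ^ k)
        \<le> p ^ card (U \<union> A) * C ^ k" using Suc.IH by blast
  qed
  also have "\<dots> = C ^ k * (\<Sum>A\<in>H. p ^ card (U \<union> A))" by (simp add: sum_distrib_left mult_ac)
  also have "\<dots> \<le> C ^ k * (p ^ card U * C)"
    using key[OF Suc.prems(1) cU] C by (intro mult_left_mono) auto
  finally show ?case by (simp add: mult_ac)
qed


theorem mainTheorem5:
  fixes \<alpha> :: real and l :: nat
  assumes "\<alpha> > 0" and "l > 0"
  shows "\<exists>\<rho>>0. \<forall>n::nat. \<forall>H::nat set set.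
           uniform_hypergraph n l H \<and> real (card H) \<le> \<rho> * real n ^ l \<longrightarrow>
           (\<forall>p::real. 0 \<le> p \<and> p \<le> 1 \<longrightarrow>
              measure_pmf.prob (random_subset n p)
                {f. real (induced_edges H {v. f v}) \<ge> \<alpha> * (real n * p) ^ l}
              \<le> exp (- \<rho> * real n * p))"
proof -
  define \<rho> where "\<rho> = min (\<alpha> / (3 * (1 + real l ^ 2))) (1 / (real l + 1))"
  have \<rho>pos: "\<rho> > 0" unfolding \<rho>_def using assms by (simp add: add_pos_nonneg)
  have \<rho>1: "\<rho> * (1 + real l ^ 2) \<le> \<alpha> / 3"
  proof -
    have "\<rho> \<le> \<alpha> / (3 * (1 + real l ^ 2))" unfolding \<rho>_def by simp
    hence "\<rho> * (1 + real l ^ 2) \<le> \<alpha> / (3 * (1 + real l ^ 2)) * (1 + real l ^ 2)"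
      by (intro mult_right_mono) auto
    also have "\<dots> = \<alpha> / 3"
    proof -
      have "1 + real l ^ 2 > 0" by (simp add: add_pos_nonneg)
      thus ?thesis by (simp add: field_simps)
    qed
    finally show ?thesis .
  qed
  have \<rho>2: "\<rho> * real l \<le> 1"
  proof -
    have "\<rho> \<le> 1 / (real l + 1)" unfolding \<rho>_def by simp
    hence "\<rho> * real l \<le> 1 / (real l + 1) * real l" by (intro mult_right_mono) auto
    also have "\<dots> \<le> 1" by (simp add: field_simps)
    finally show ?thesis .
  qed
  show ?thesis
  proof (intro exI[of _ \<rho>] conjI allI impI)
    show "\<rho> > 0" by (rule \<rho>pos)
    fix n :: nat and H :: "nat set set" and p :: real
    assume HH: "uniform_hypergraph n l H \<and> real (card H) \<le> \<rho> * real n ^ l"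
      and pp: "0 \<le> p \<and> p \<le> 1"
    have H: "uniform_hypergraph n l H" and cH: "real (card H) \<le> \<rho> * real n ^ l" using HH by auto
    have p: "0 \<le> p" "p \<le> 1" using pp by auto
    define m where "m = real n * p"
    have m0: "m \<ge> 0" unfolding m_def using p by simp
    have ev: "{f. real (induced_edges H {v. f v}) \<ge> \<alpha> * (real n * p) ^ l} = {f. \<alpha> * m ^ l \<le> XX H f}"
      by (simp add: XX_def m_def)
    have ex: "exp (- \<rho> * real n * p) = exp (- (\<rho> * m))" by (simp add: m_def mult_ac)
    show "measure_pmf.prob (random_subset n p)
                {f. real (induced_edges H {v. f v}) \<ge> \<alpha> * (real n * p) ^ l}
              \<le> exp (- \<rho> * real n * p)"
    proof (cases "m = 0")
      case True
      then show ?thesis unfolding ex by (simp add: measure_pmf.prob_le_1)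
    next
      case False
      hence mpos: "m > 0" using m0 by simp
      define K where "K = nat \<lceil>\<rho> * m\<rceil>"
      have rm0: "0 \<le> \<rho> * m" using \<rho>pos m0 by simp
      have KK: "real K = of_int \<lceil>\<rho> * m\<rceil>" unfolding K_def using rm0 by simp
      have K1: "real K \<ge> \<rho> * m" unfolding KK by (rule le_of_int_ceiling)
      have K2: "real K \<le> \<rho> * m + 1" unfolding KK by (rule of_int_ceiling_le_add_one)
      have Kpos: "K \<ge> 1" using K1 \<rho>pos mpos
        by (metis mult_pos_pos not_less of_nat_0 less_one order.strict_trans2 le_neq_implies_less nat_less_le)
      define \<Lambda> where "\<Lambda> = \<rho> * real l * m"
      define C where "C = \<rho> * (1 + real l ^ 2) * m ^ l"
      have C0: "C \<ge> 0" unfolding C_def using \<rho>pos m0 by simp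
      have key: "(\<Sum>A\<in>H. p ^ card (U \<union> A)) \<le> p ^ card U * C"
        if U: "U \<subseteq> {..<n}" and cU: "real (card U) \<le> \<Lambda>" for U
      proof -
        have t: "real (card U) ^ b * real n ^ (l - b) * p ^ (l - b) \<le> \<rho> * real l * m ^ l"
          if b: "b \<in> {1..l}" for b
        proof -
          have "real (card U) ^ b * real n ^ (l - b) * p ^ (l - b) = real (card U) ^ b * m ^ (l - b)"
            by (simp add: m_def power_mult_distrib)
          also have "\<dots> \<le> \<Lambda> ^ b * m ^ (l - b)"
            by (intro mult_right_mono power_mono cU) (use m0 in auto)
          also have "\<dots> = (\<rho> * real l) ^ b * (m ^ b * m ^ (l - b))"
            by (simp add: \<Lambda>_def power_mult_distrib)
          also have "m ^ b * m ^ (l - b) = m ^ l" using b by (simp flip: power_add)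
          also have "(\<rho> * real l) ^ b \<le> (\<rho> * real l) ^ 1"
            using b \<rho>pos \<rho>2 by (intro power_decreasing) auto
          hence "(\<rho> * real l) ^ b * m ^ l \<le> \<rho> * real l * m ^ l"
            using m0 by (intro mult_right_mono) auto
          finally show ?thesis .
        qed
        have "(\<Sum>A\<in>H. p ^ card (U \<union> A)) \<le>
          p ^ card U * (real (card H) * p ^ l + (\<Sum>b\<in>{1..l}. real (card U) ^ b * real n ^ (l - b) * p ^ (l - b)))"
          by (rule key_sum[OF H U p])
        also have "\<dots> \<le> p ^ card U * C"
        proof (intro mult_left_mono)
          have "real (card H) * p ^ l \<le> \<rho> * real n ^ l * p ^ l"
            using cH p by (intro mult_right_mono) auto
          also have "\<dots> = \<rho> * m ^ l" by (simp add: m_def power_mult_distrib)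
          finally have a: "real (card H) * p ^ l \<le> \<rho> * m ^ l" .
          have "(\<Sum>b\<in>{1..l}. real (card U) ^ b * real n ^ (l - b) * p ^ (l - b))
              \<le> (\<Sum>b\<in>{1..l}. \<rho> * real l * m ^ l)"
            by (rule sum_mono) (rule t)
          also have "\<dots> = \<rho> * real l ^ 2 * m ^ l" by (simp add: power2_eq_square)
          finally have "real (card H) * p ^ l + (\<Sum>b\<in>{1..l}. real (card U) ^ b * real n ^ (l - b) * p ^ (l - b))
              \<le> \<rho> * m ^ l + \<rho> * real l ^ 2 * m ^ l" using a by linarith
          also have "\<dots> = C" by (simp add: C_def algebra_simps)
          finally show "real (card H) * p ^ l + (\<Sum>b\<in>{1..l}. real (card U) ^ b * real n ^ (l - b) * p ^ (l - b)) \<le> C" .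
        qed (use p in auto)
        finally show ?thesis .
      qed
      have EK: "measure_pmf.expectation (random_subset n p) (\<lambda>f. indU {} f * XX H f ^ K) \<le> p ^ card ({}::nat set) * C ^ K"
      proof (rule induct_bound[OF H p C0 key])
        have "real K * real l \<le> (\<rho> * m + 1) * real l" using K2 by (intro mult_right_mono) auto
        thus "real (card ({}::nat set) + K * l) \<le> \<Lambda> + real l" by (simp add: \<Lambda>_def algebra_simps)
      qed auto
      hence EK': "measure_pmf.expectation (random_subset n p) (\<lambda>f. XX H f ^ K) \<le> C ^ K"
        by (simp add: indU_def)
      define a where "a = \<alpha> * m ^ l"
      have apos: "a > 0" unfolding a_def using assms mpos by simp
      have X0: "XX H f \<ge> 0" for f by (simp add: XX_def)
      have "measure_pmf.prob (random_subset n p) {f. a \<le> XX H f}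
          \<le> measure_pmf.prob (random_subset n p) {f. a ^ K \<le> XX H f ^ K}"
        using apos by (intro measure_pmf.finite_measure_mono) (auto intro: power_mono)
      also have "\<dots> \<le> measure_pmf.expectation (random_subset n p) (\<lambda>f. XX H f ^ K) / a ^ K"
        using integral_Markov_inequality_measure[of "measure_pmf (random_subset n p)" "\<lambda>f. XX H f ^ K" UNIV "a ^ K"]
          apos X0 by (simp add: integ)
      also have "\<dots> \<le> C ^ K / a ^ K"
        using EK' apos by (intro divide_right_mono) auto
      also have "\<dots> = (C / a) ^ K" by (simp add: power_divide)
      also have "C / a = \<rho> * (1 + real l ^ 2) / \<alpha>"
        unfolding C_def a_def using mpos by simp
      also have "\<dots> \<le> 1 / 3" using \<rho>1 assms by (simp add: divide_simps)
      hence "(\<rho> * (1 + real l ^ 2) / \<alpha>) ^ K \<le> (1/3) ^ K"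
        using \<rho>pos assms by (intro power_mono) auto
      also have "(1/3::real) ^ K \<le> exp (-1) ^ K"
      proof (intro power_mono)
        have "exp 1 \<le> (3::real)" by (rule exp_le)
        thus "1/3 \<le> exp (-1::real)" by (simp add: exp_minus field_simps)
      qed auto
      also have "\<dots> = exp (- real K)" by (simp flip: exp_of_nat_mult)
      also have "\<dots> \<le> exp (- (\<rho> * m))" using K1 by simp
      finally show ?thesis unfolding ev ex a_def .
    qed
  qed
qed

end
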